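(* Consider an $L$-layer LISTA network with initial weights $(W_{10}^l)_{i,j}\sim\mathcal N(0,1)$, $(W_{20}^l)_{i,j}\sim\mathcal N(0,1)$ i.i.d., $l\in[L]$, and suppose $\|W_{20}^l\|\le c_{20}\sqrt m$ for all $l$ with $c_{20}=3$. Then for any $\mathbf W_1,\mathbf W_2$ with $\|\mathbf W_1-\mathbf W_{10}\|\le R_1$ and $\|\mathbf W_2-\mathbf W_{20}\|\le R_2$ and any $s\in[m]$, $$\|\mathbf b_s^l\|\le L_\sigma^{L-l}\big(c_{20}+R_2/\sqrt m\big)^{L-l},\quad l\in[L].$$ In particular, at initialization ($R_2=0$), $\|\mathbf b^l_{s,0}\|\le L_\sigma^{L-l}c_{20}^{L-l}$.
   Context: Fix $\lambda>0$ and $\sigma(x)=\log(1+e^{x-\lambda})-\log(1+e^{-x-\lambda})$ (componentwise), with $|\sigma'|\le L_\sigma$. LISTA: input $\mathbf y\in\mathbb R^n$, initial $\mathbf x^0\in\mathbb R^m$, $\mathbf x^l=\sigma\big(\frac1{\sqrt n}W_1^l\mathbf y+\frac1{\sqrt m}W_2^l\mathbf x^{l-1}\big)$ with $W_1^l\in\mathbb R^{m\times n}$, $W_2^l\in\mathbb R^{m\times m}$, output $\mathbf f=\frac1{\sqrt m}\mathbf x^L$, $f_s$ its $s$-th entry. $\mathbf b_s^l=\partial f_s/\partial\mathbf x^l\in\mathbb R^m$, and $\mathbf b^l_{s,0}$ is $\mathbf b_s^l$ evaluated at the initial weights. $\mathbf W_1=(W_1^l)_l$, $\mathbf W_2=(W_2^l)_l$;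 the distance $\|\mathbf W_1-\mathbf W_{10}\|$ is the Frobenius norm over all entries. $\|\cdot\|$ is the Euclidean norm for vectors and the spectral norm for matrices. *)

theory Defs
  imports "HOL-Analysis.Analysis"
begin

text \<open>Scalar activation sigma(x) = log(1+e^(x-lambda)) - log(1+e^(-x-lambda)).\<close>
definition sigma :: "real \<Rightarrow> real \<Rightarrow> real" where
  "sigma lam x = ln (1 + exp (x - lam)) - ln (1 + exp (- x - lam))"

text \<open>Componentwise activation.\<close>
definition sigma_vec :: "real \<Rightarrow> real ^ 'm \<Rightarrow> real ^ 'm" where
  "sigma_vec lam v = (\<chi> i. sigma lam (v $ i))"

text \<open>Layer l of LISTA: x \<mapsto> sigma(W1^l y / sqrt n + W2^l x / sqrt m).\<close>
definition lista_layer ::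
  "real \<Rightarrow> (nat \<Rightarrow> real ^ 'n ^ 'm) \<Rightarrow> (nat \<Rightarrow> real ^ 'm ^ 'm) \<Rightarrow> real ^ 'n
     \<Rightarrow> nat \<Rightarrow> real ^ 'm \<Rightarrow> real ^ 'm" where
  "lista_layer lam W1 W2 y l x =
     sigma_vec lam ((1 / sqrt (real CARD('n))) *\<^sub>R (W1 l *v y)
                  + (1 / sqrt (real CARD('m))) *\<^sub>R (W2 l *v x))"

text \<open>lista_run ... l k x: starting from x = x^l, apply layers l+1, ..., l+k.\<close>
primrec lista_run ::
  "real \<Rightarrow> (nat \<Rightarrow> real ^ 'n ^ 'm) \<Rightarrow> (nat \<Rightarrow> real ^ 'm ^ 'm) \<Rightarrow> real ^ 'n
     \<Rightarrow> nat \<Rightarrow> nat \<Rightarrow> real ^ 'm \<Rightarrow> real ^ 'm" where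
  "lista_run lam W1 W2 y l 0 x = x"
| "lista_run lam W1 W2 y l (Suc k) x = lista_run lam W1 W2 y (Suc l) k (lista_layer lam W1 W2 y (Suc l) x)"

text \<open>Hidden state x^l computed from the initial state x^0.\<close>
definition lista_state where
  "lista_state lam W1 W2 y x0 l = lista_run lam W1 W2 y 0 l x0"

text \<open>f_s as a function of the layer-l state x^l (network of depth L).\<close>
definition lista_out_from ::
  "real \<Rightarrow> (nat \<Rightarrow> real ^ 'n ^ 'm) \<Rightarrow> (nat \<Rightarrow> real ^ 'm ^ 'm) \<Rightarrow> real ^ 'n
     \<Rightarrow> nat \<Rightarrow> nat \<Rightarrow> 'm \<Rightarrow> real ^ 'm \<Rightarrow> real" where
  "lista_out_from lam W1 W2 y L l s x =
     (lista_run lam W1 W2 y l (L - l) x $ s) / sqrt (real CARD('m))"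

text \<open>b_s^l = partial f_s / partial x^l, evaluated at the actual state x^l
  (gradient, built from the Frechet derivative).\<close>
definition lista_b ::
  "real \<Rightarrow> (nat \<Rightarrow> real ^ 'n ^ 'm) \<Rightarrow> (nat \<Rightarrow> real ^ 'm ^ 'm) \<Rightarrow> real ^ 'n
     \<Rightarrow> real ^ 'm \<Rightarrow> nat \<Rightarrow> nat \<Rightarrow> 'm \<Rightarrow> real ^ 'm" where
  "lista_b lam W1 W2 y x0 L l s =
     (\<chi> i. frechet_derivative (lista_out_from lam W1 W2 y L l s)
              (at (lista_state lam W1 W2 y x0 l)) (axis i 1))"

text \<open>Frobenius distance over all layers 1..L.\<close>
definition weights_dist :: "nat \<Rightarrow> (nat \<Rightarrow> real ^ 'a::finite ^ 'b::finite) \<Rightarrow> (nat \<Rightarrow> real ^ 'a ^ 'b) \<Rightarrow> real" where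
  "weights_dist L W V = sqrt (\<Sum>l\<in>{1..L}. \<Sum>i\<in>UNIV. \<Sum>j\<in>UNIV. (W l $ i $ j - V l $ i $ j)\<^sup>2)"

text \<open>Spectral (operator) norm of a matrix.\<close>
definition spec_norm :: "real ^ 'a ^ 'b \<Rightarrow> real" where
  "spec_norm A = onorm (\<lambda>x. A *v x)"

end

theory Submission
  imports Defs
begin

lemma sigma_deriv: "(sigma lam has_real_derivative deriv (sigma lam) x) (at x)"
proof -
  have "\<exists>D. (sigma lam has_real_derivative D) (at x)"
    unfolding sigma_def[abs_def]
    by (rule exI, (rule derivative_eq_intros refl | simp add: add_pos_pos)+)
  then show ?thesis using DERIV_imp_deriv by blast
qed

lemma sigma_vec_deriv: fixes z :: "real^'m::finite"
  shows
  "(sigma_vec lam has_derivative (\<lambda>h. \<chi> i. deriv (sigma lam) (z $ i) * h $ i)) (at z)"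
proof (subst has_derivative_componentwise_within, intro ballI)
  fix b :: "real^'m" assume "b \<in> Basis"
  then obtain i where b: "b = axis i 1" by (auto simp: Basis_vec_def)
  have "((\<lambda>x. sigma lam (x $ i)) has_derivative (\<lambda>h. deriv (sigma lam) (z $ i) * h $ i)) (at z)"
  proof -
    have 1: "((\<lambda>x. x$i) has_derivative (\<lambda>h. h$i)) (at z)"
      by (rule bounded_linear_imp_has_derivative[OF bounded_linear_vec_nth])
    have 2: "(sigma lam has_derivative (\<lambda>h. deriv (sigma lam) (z $ i) * h)) (at (z$i))"
      using sigma_deriv[of lam "z$i"] by (simp add: has_field_derivative_def)
    show ?thesis using has_derivative_compose[OF 1 2] by simp
  qed
  then show "((\<lambda>x. sigma_vec lam x \<bullet> b) has_derivative
         (\<lambda>x. (\<chi> i. deriv (sigma lam) (z $ i) * x $ i) \<bullet> b)) (at z)"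
    by (simp add: b inner_axis sigma_vec_def mult.commute)
qed

lemma diag_norm:
  fixes d h :: "real^'m::finite"
  assumes "\<And>i. \<bar>d $ i\<bar> \<le> Ls"
  shows "norm (\<chi> i. d $ i * h $ i) \<le> Ls * norm h"
proof -
  have "norm (\<chi> i. d $ i * h $ i) = L2_set (\<lambda>i. \<bar>d $ i * h $ i\<bar>) UNIV"
    by (simp add: norm_vec_def)
  also have "\<dots> \<le> L2_set (\<lambda>i. Ls * \<bar>h $ i\<bar>) UNIV"
    by (rule L2_set_mono) (auto simp: abs_mult intro!: mult_right_mono assms)
  also have "\<dots> = Ls * norm h"
    using assms[of undefined] by (simp add: L2_set_right_distrib norm_vec_def)
  finally show ?thesis .
qed

lemma layer_deriv:
  fixes W1 :: "nat \<Rightarrow> real ^ 'n::finite ^ 'm::finite" and W2 :: "nat \<Rightarrow> real ^ 'm ^ 'm"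
  assumes Ls: "\<forall>x. \<bar>deriv (sigma lam) x\<bar> \<le> Ls"
  shows "\<exists>D. (lista_layer lam W1 W2 y l has_derivative D) (at x) \<and>
     (\<forall>h. norm (D h) \<le> Ls * onorm ((*v) (W2 l)) / sqrt (real CARD('m)) * norm h)"
proof -
  have Ls0: "0 \<le> Ls" using Ls order_trans[OF abs_ge_zero] by blast
  define a where "a = 1 / sqrt (real CARD('m))"
  define c where "c = (1 / sqrt (real CARD('n))) *\<^sub>R (W1 l *v y)"
  define z where "z = c + a *\<^sub>R (W2 l *v x)"
  have inner: "((\<lambda>x. c + a *\<^sub>R (W2 l *v x)) has_derivative (\<lambda>h. a *\<^sub>R (W2 l *v h))) (at x)"
    by (auto intro!: derivative_eq_intros bounded_linear_imp_has_derivative)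
  have eq: "lista_layer lam W1 W2 y l = (\<lambda>x. sigma_vec lam (c + a *\<^sub>R (W2 l *v x)))"
    by (auto simp: lista_layer_def a_def c_def)
  let ?D = "\<lambda>h. \<chi> i. deriv (sigma lam) (z $ i) * (a *\<^sub>R (W2 l *v h)) $ i"
  have "(lista_layer lam W1 W2 y l has_derivative ?D) (at x)"
    unfolding eq z_def using has_derivative_compose[OF inner sigma_vec_deriv[of lam "c + a *\<^sub>R (W2 l *v x)"]]
    by simp
  moreover have "norm (?D h) \<le> Ls * onorm ((*v) (W2 l)) / sqrt (real CARD('m)) * norm h" for h
  proof -
    have "norm (?D h) \<le> Ls * norm (a *\<^sub>R (W2 l *v h))"
      using diag_norm[of "\<chi> i. deriv (sigma lam) (z $ i)" Ls "a *\<^sub>R (W2 l *v h)"] Ls by simp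
    also have "\<dots> = Ls * a * norm (W2 l *v h)" by (simp add: a_def)
    also have "\<dots> \<le> Ls * a * (onorm ((*v) (W2 l)) * norm h)"
      using Ls0 onorm[OF matrix_vector_mul_bounded_linear, of "W2 l" h]
      by (intro mult_left_mono) (auto simp: a_def)
    finally show ?thesis by (simp add: a_def)
  qed
  ultimately show ?thesis by blast
qed

lemma run_deriv:
  fixes W1 :: "nat \<Rightarrow> real ^ 'n::finite ^ 'm::finite" and W2 :: "nat \<Rightarrow> real ^ 'm ^ 'm"
  assumes Ls: "\<forall>x. \<bar>deriv (sigma lam) x\<bar> \<le> Ls"
  shows "\<exists>D. (lista_run lam W1 W2 y l k has_derivative D) (at x) \<and>
     (\<forall>h. norm (D h) \<le> (\<Prod>j<k. Ls * onorm ((*v) (W2 (Suc (l + j)))) / sqrt (real CARD('m))) * norm h)"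
proof (induction k arbitrary: l x)
  case 0
  have "(lista_run lam W1 W2 y l 0 has_derivative (\<lambda>h. h)) (at x)"
    by (simp add: has_derivative_ident[unfolded id_def] lista_run.simps(1)[abs_def])
  then show ?case by (intro exI[of _ "\<lambda>h. h"]) simp
next
  case (Suc k)
  let ?c = "\<lambda>j. Ls * onorm ((*v) (W2 j)) / sqrt (real CARD('m))"
  obtain D1 where D1: "(lista_layer lam W1 W2 y (Suc l) has_derivative D1) (at x)"
    "\<And>h. norm (D1 h) \<le> ?c (Suc l) * norm h"
    using layer_deriv[OF Ls, of W1 W2 y "Suc l" x] by blast
  obtain D2 where D2: "(lista_run lam W1 W2 y (Suc l) k has_derivative D2) (at (lista_layer lam W1 W2 y (Suc l) x))"
    "\<And>h. norm (D2 h) \<le> (\<Prod>j<k. ?c (Suc (Suc l + j))) * norm h"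
    using Suc.IH[of "Suc l" "lista_layer lam W1 W2 y (Suc l) x"] by blast
  have eq: "lista_run lam W1 W2 y l (Suc k) = (\<lambda>x. lista_run lam W1 W2 y (Suc l) k (lista_layer lam W1 W2 y (Suc l) x))"
    by auto
  have der: "(lista_run lam W1 W2 y l (Suc k) has_derivative (\<lambda>h. D2 (D1 h))) (at x)"
    unfolding eq by (rule has_derivative_compose[OF D1(1) D2(1)])
  have P0: "0 \<le> (\<Prod>j<k. ?c (Suc (Suc l + j)))"
    using Ls by (intro prod_nonneg) (auto intro!: divide_nonneg_nonneg mult_nonneg_nonneg onorm_pos_le
       intro: order_trans[OF abs_ge_zero])
  have "norm (D2 (D1 h)) \<le> (\<Prod>j<Suc k. ?c (Suc (l + j))) * norm h" for h
  proof -
    have "norm (D2 (D1 h)) \<le> (\<Prod>j<k. ?c (Suc (Suc l + j))) * norm (D1 h)" by (rule D2(2))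
    also have "\<dots> \<le> (\<Prod>j<k. ?c (Suc (Suc l + j))) * (?c (Suc l) * norm h)"
      by (rule mult_left_mono[OF D1(2) P0])
    also have "\<dots> = (\<Prod>j<Suc k. ?c (Suc (l + j))) * norm h"
    proof -
      have "(\<Prod>j<Suc k. ?c (Suc (l + j))) = ?c (Suc (l + 0)) * (\<Prod>j<k. ?c (Suc (l + Suc j)))"
        by (rule prod.lessThan_Suc_shift)
      then show ?thesis by (simp del: prod.lessThan_Suc add: mult_ac)
    qed
    finally show ?thesis .
  qed
  with der show ?case by blast
qed

lemma onorm_frob:
  fixes A :: "real ^ 'n::finite ^ 'm::finite"
  shows "onorm ((*v) A) \<le> sqrt (\<Sum>i\<in>UNIV. \<Sum>j\<in>UNIV. (A $ i $ j)\<^sup>2)"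
proof (rule onorm_le)
  fix x :: "real ^ 'n"
  have comp: "(A *v x) $ i = inner (A $ i) x" for i
    by (simp add: matrix_vector_mult_def inner_vec_def)
  have "norm (A *v x) = L2_set (\<lambda>i. \<bar>inner (A $ i) x\<bar>) UNIV"
    by (simp add: norm_vec_def comp)
  also have "\<dots> \<le> L2_set (\<lambda>i. norm x * norm (A $ i)) UNIV"
    by (rule L2_set_mono) (metis Cauchy_Schwarz_ineq2 mult.commute, simp)
  also have "\<dots> = norm x * L2_set (\<lambda>i. norm (A $ i)) UNIV"
    by (simp add: L2_set_right_distrib)
  also have "L2_set (\<lambda>i. norm (A $ i)) UNIV = sqrt (\<Sum>i\<in>UNIV. \<Sum>j\<in>UNIV. (A $ i $ j)\<^sup>2)"
    by (simp add: L2_set_def norm_vec_def sum_nonneg)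
  finally show "norm (A *v x) \<le> sqrt (\<Sum>i\<in>UNIV. \<Sum>j\<in>UNIV. (A $ i $ j)\<^sup>2) * norm x"
    by (simp add: mult.commute)
qed

lemma onorm_W2:
  fixes W2 W20 :: "nat \<Rightarrow> real ^ 'm::finite ^ 'm"
  assumes "j \<in> {1..L}"
  shows "onorm ((*v) (W2 j)) \<le> onorm ((*v) (W20 j)) + weights_dist L W2 W20"
proof -
  have "onorm ((*v) (W2 j)) = onorm (\<lambda>x. W20 j *v x + (W2 j - W20 j) *v x)"
    by (simp add: matrix_vector_mult_diff_rdistrib)
  also have "\<dots> \<le> onorm ((*v) (W20 j)) + onorm ((*v) (W2 j - W20 j))"
    by (rule onorm_triangle) auto
  also have "onorm ((*v) (W2 j - W20 j)) \<le> weights_dist L W2 W20"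
  proof -
    have "onorm ((*v) (W2 j - W20 j)) \<le> sqrt (\<Sum>i\<in>UNIV. \<Sum>k\<in>UNIV. (W2 j $ i $ k - W20 j $ i $ k)\<^sup>2)"
      using onorm_frob[of "W2 j - W20 j"] by simp
    also have "\<dots> \<le> weights_dist L W2 W20"
      unfolding weights_dist_def
      by (rule real_sqrt_le_mono, rule member_le_sum[OF assms]) (auto intro!: sum_nonneg)
    finally show ?thesis .
  qed
  finally show ?thesis by simp
qed

theorem lemma6:
  fixes lam L\<^sub>\<sigma> R1 R2 :: real
    and L :: nat
    and W10 W1 :: "nat \<Rightarrow> real ^ 'n::finite ^ 'm::finite"
    and W20 W2 :: "nat \<Rightarrow> real ^ 'm ^ 'm"
    and y :: "real ^ 'n" and x0 :: "real ^ 'm" and s :: 'm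
  assumes "lam > 0"
    and "\<forall>x. \<bar>deriv (sigma lam) x\<bar> \<le> L\<^sub>\<sigma>"
    and "\<forall>l\<in>{1..L}. spec_norm (W20 l) \<le> 3 * sqrt (real CARD('m))"
    and "weights_dist L W1 W10 \<le> R1"
    and "weights_dist L W2 W20 \<le> R2"
    and "l \<in> {1..L}"
  shows "norm (lista_b lam W1 W2 y x0 L l s)
           \<le> L\<^sub>\<sigma> ^ (L - l) * (3 + R2 / sqrt (real CARD('m))) ^ (L - l)"
proof -
  note Ls = assms(2)
  have Ls0: "0 \<le> L\<^sub>\<sigma>" using Ls order_trans[OF abs_ge_zero] by blast
  define m where "m = sqrt (real CARD('m))"
  have m1: "1 \<le> m" unfolding m_def by simp
  have R20: "0 \<le> R2" using assms(5) unfolding weights_dist_def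
    by (meson order_trans real_sqrt_ge_zero sum_nonneg zero_le_power2)
  define p where "p = lista_state lam W1 W2 y x0 l"
  define C where "C = (\<Prod>j<L - l. L\<^sub>\<sigma> * onorm ((*v) (W2 (Suc (l + j)))) / m)"
  obtain D where D: "(lista_run lam W1 W2 y l (L - l) has_derivative D) (at p)"
    "\<And>h. norm (D h) \<le> C * norm h"
    using run_deriv[OF Ls, of W1 W2 y l "L - l" p] unfolding C_def m_def by blast
  define F' where "F' = (\<lambda>h. (1 / m) * (D h $ s))"
  have Feq: "lista_out_from lam W1 W2 y L l s = (\<lambda>x. (1 / m) * (lista_run lam W1 W2 y l (L - l) x $ s))"
    by (auto simp: lista_out_from_def m_def)
  have Fd: "(lista_out_from lam W1 W2 y L l s has_derivative F') (at p)"
    unfolding Feq F'_def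
    by (intro has_derivative_mult_right has_derivative_compose[OF D(1)]
          bounded_linear_imp_has_derivative[OF bounded_linear_vec_nth])
  have lin: "linear F'" using has_derivative_linear[OF Fd] .
  have Fb: "\<bar>F' h\<bar> \<le> C / m * norm h" for h
  proof -
    have "\<bar>F' h\<bar> = \<bar>D h $ s\<bar> / m" using m1 by (simp add: F'_def abs_mult)
    also have "\<dots> \<le> norm (D h) / m" using m1
      by (intro divide_right_mono component_le_norm_cart) auto
    also have "\<dots> \<le> C * norm h / m" using m1 D(2)[of h] by (intro divide_right_mono) auto
    finally show ?thesis by simp
  qed
  define b where "b = lista_b lam W1 W2 y x0 L l s"
  have b: "b = (\<chi> i. F' (axis i 1))"
    unfolding b_def lista_b_def p_def[symmetric] frechet_derivative_at[OF Fd, symmetric] ..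
  have "norm b ^ 2 = (\<Sum>i\<in>UNIV. b $ i * F' (axis i 1))"
    by (simp add: power2_norm_eq_inner inner_vec_def b)
  also have "\<dots> = F' (\<Sum>i\<in>UNIV. b $ i *\<^sub>R axis i 1)"
    by (simp add: linear_sum[OF lin] linear_scale[OF lin])
  also have "(\<Sum>i\<in>UNIV. b $ i *\<^sub>R axis i 1) = b"
    using basis_expansion[of b] by (simp add: scalar_mult_eq_scaleR)
  finally have sq: "norm b ^ 2 \<le> C / m * norm b" using Fb[of b] by simp
  have C0: "0 \<le> C" unfolding C_def using Ls0 m1
    by (intro prod_nonneg) (auto intro!: divide_nonneg_nonneg mult_nonneg_nonneg onorm_pos_le)
  have nb: "norm b \<le> C / m"
  proof (cases "norm b = 0")
    case True then show ?thesis using C0 m1 by simp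
  next
    case False
    then have "0 < norm b" by simp
    with sq show ?thesis
      by (metis mult_right_le_imp_le power2_eq_square)
  qed
  have "C / m \<le> C" using C0 m1 by (simp add: divide_le_eq mult_le_cancel_left1 order_trans)
  also have "C \<le> (\<Prod>j<L - l. L\<^sub>\<sigma> * (3 + R2 / m))"
    unfolding C_def
  proof (rule prod_mono, intro conjI)
    fix j assume j: "j \<in> {..<L - l}"
    then have jL: "Suc (l + j) \<in> {1..L}" by auto
    show "0 \<le> L\<^sub>\<sigma> * onorm ((*v) (W2 (Suc (l + j)))) / m"
      using Ls0 m1 by (auto intro!: divide_nonneg_nonneg mult_nonneg_nonneg onorm_pos_le)
    have "onorm ((*v) (W2 (Suc (l + j)))) \<le> 3 * m + R2"
      using onorm_W2[OF jL, of W2 W20] assms(3) jL assms(5)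
      unfolding spec_norm_def m_def by fastforce
    then have "onorm ((*v) (W2 (Suc (l + j)))) / m \<le> 3 + R2 / m"
      using m1 by (simp add: divide_le_eq distrib_right)
    then show "L\<^sub>\<sigma> * onorm ((*v) (W2 (Suc (l + j)))) / m \<le> L\<^sub>\<sigma> * (3 + R2 / m)"
      using Ls0 by (metis mult_left_mono times_divide_eq_right)
  qed
  also have "\<dots> = L\<^sub>\<sigma> ^ (L - l) * (3 + R2 / m) ^ (L - l)"
    by (simp add: power_mult_distrib)
  finally show ?thesis using nb unfolding b_def m_def by simp
qed

end
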